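(* For all real $\nu\geq\frac{e^2}{2(e-2)}$ and all real $z$ with $0<z\leq 1$, $$K_\nu(z)<\left(\frac{\nu}{z}\right)^{\nu}.$$
   Context: $K_\nu$ denotes the modified Bessel function of the second kind of real order $\nu$, for real argument $z>0$. *)

theory Defs
  imports "HOL-Analysis.Analysis"
begin

text \<open>Modified Bessel function of the second kind of real order nu, for real z > 0,
  via the standard integral representation (DLMF 10.32.9):
  K_nu(z) = integral over t in (0,infinity) of exp(-z cosh t) cosh(nu t).\<close>
definition besselK :: "real \<Rightarrow> real \<Rightarrow> real" where
  "besselK \<nu> z = (LBINT t:{0<..}. exp (- z * cosh t) * cosh (\<nu> * t))"

end

theory Submission
  imports Defs
begin

lemma exp_tail:
  fixes T :: real
  shows "set_integrable lborel {T<..} (\<lambda>t. exp (-t))"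
    and "(LBINT t:{T<..}. exp (-t)) = exp (-T)"
proof -
  have A: "(((\<lambda>t. - exp (-t)) \<circ> real_of_ereal) \<longlongrightarrow> - exp (-T)) (at_right (ereal T))"
    by (auto simp: ereal_tendsto_simps intro!: tendsto_eq_intros)
  have B: "(((\<lambda>t. - exp (-t)) \<circ> real_of_ereal) \<longlongrightarrow> 0) (at_left \<infinity>)"
  proof -
    have "((\<lambda>x::real. exp (-x)) \<longlongrightarrow> 0) at_top"
      by (rule filterlim_compose[OF exp_at_bot filterlim_uminus_at_bot_at_top])
    from tendsto_minus[OF this] show ?thesis unfolding ereal_tendsto_simps by simp
  qed
  have D: "\<And>x. ereal T < ereal x \<Longrightarrow> ereal x < \<infinity> \<Longrightarrow> DERIV (\<lambda>t. - exp (-t)) x :> exp (-x)"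
    by (auto intro!: derivative_eq_intros)
  note FTC = interval_integral_FTC_nonneg[where a="ereal T" and b=\<infinity> and f="\<lambda>t. exp (-t)", OF _ D _ _ A B]
  show "set_integrable lborel {T<..} (\<lambda>t. exp (-t))"
    using FTC(1) by simp
  show "(LBINT t:{T<..}. exp (-t)) = exp (-T)"
    using FTC(2) by (simp add: interval_integral_to_infinity_eq)
qed

lemma key_exp:
  fixes y m :: real
  assumes "y > 0" "m > 0"
  shows "exp (-y) \<le> exp (m * (ln m - 1) - m * ln y)"
proof -
  have "ln (y/m) \<le> y/m - 1" using assms by (intro ln_le_minus_one) auto
  hence "m * ln (y/m) \<le> m * (y/m - 1)" using assms by (intro mult_left_mono) auto
  moreover have "ln (y/m) = ln y - ln m" using assms by (simp add: ln_div)
  moreover have "m * (y/m - 1) = y - m" using assms by (simp add: field_simps)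
  ultimately have "m * ln y - m * ln m \<le> y - m" by (simp add: right_diff_distrib)
  hence "-y \<le> m * (ln m - 1) - m * ln y" by (simp add: right_diff_distrib)
  thus ?thesis by simp
qed

lemma ln2_bound: "ln (2::real) \<le> 3/4"
proof -
  have "(1 + 3/32::real) ^ 8 \<le> exp (3/32) ^ 8"
    by (intro power_mono exp_ge_add_one_self) auto
  also have "\<dots> = exp (3/4)" by (simp add: exp_of_nat_mult[symmetric])
  finally have "2 \<le> exp (3/4::real)" by (simp add: power_divide)
  hence "ln 2 \<le> ln (exp (3/4::real))" by (subst ln_le_cancel_iff) auto
  thus ?thesis by simp
qed

lemma numeric:
  fixes \<nu> :: real
  assumes "\<nu> \<ge> 5"
  shows "(\<nu>+1) * (ln (\<nu>+1) - 1 + ln 2) \<le> \<nu> * ln \<nu> + ln (\<nu> - 1)"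
proof -
  have a: "ln (\<nu>+1) \<le> ln \<nu> + 1/\<nu>"
  proof -
    have p: "1 + 1/\<nu> > 0" using assms by (simp add: add_pos_pos)
    have "\<nu> * (1 + 1/\<nu>) = \<nu>+1" using assms by (simp add: field_simps)
    hence "ln (\<nu>+1) = ln (\<nu> * (1 + 1/\<nu>))" by simp
    also have "\<dots> = ln \<nu> + ln (1 + 1/\<nu>)" using assms p by (intro ln_mult_pos) auto
    also have "\<dots> \<le> ln \<nu> + 1/\<nu>" using assms by (intro add_left_mono ln_add_one_self_le_self) auto
    finally show ?thesis .
  qed
  have b: "ln \<nu> \<le> ln (\<nu>-1) + 1/(\<nu>-1)"
  proof -
    have p: "1 + 1/(\<nu>-1) > 0" using assms by (simp add: add_pos_pos)
    have "(\<nu>-1) * (1 + 1/(\<nu>-1)) = \<nu>" using assms by (simp add: field_simps)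
    hence "ln \<nu> = ln ((\<nu>-1) * (1 + 1/(\<nu>-1)))" by simp
    also have "\<dots> = ln (\<nu>-1) + ln (1 + 1/(\<nu>-1))" using assms p by (intro ln_mult_pos) auto
    also have "\<dots> \<le> ln (\<nu>-1) + 1/(\<nu>-1)" using assms by (intro add_left_mono ln_add_one_self_le_self) auto
    finally show ?thesis .
  qed
  have c1: "1/\<nu> \<le> 1/5" using assms by (simp add: field_simps)
  have c2: "1/(\<nu>-1) \<le> 1/4" using assms by (simp add: field_simps)
  have "(\<nu>+1) * (ln (\<nu>+1) - 1 + ln 2) \<le> (\<nu>+1) * (ln \<nu> + 1/\<nu> - 1 + ln 2)"
    using a assms by (intro mult_left_mono) auto
  also have "\<dots> = \<nu> * ln \<nu> + ln \<nu> + (\<nu>+1)/\<nu> + (\<nu>+1) * (ln 2 - 1)"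
    using assms by (simp add: field_simps)
  also have "(\<nu>+1)/\<nu> = 1 + 1/\<nu>" using assms by (simp add: field_simps)
  finally have e1: "(\<nu>+1) * (ln (\<nu>+1) - 1 + ln 2) \<le> \<nu> * ln \<nu> + ln \<nu> + (1 + 1/\<nu>) + (\<nu>+1) * (ln 2 - 1)" .
  have d: "(\<nu>+1) * (ln 2 - 1) \<le> 6 * (ln 2 - 1)"
    using ln2_bound assms by (intro mult_right_mono_neg) auto
  have e2: "(\<nu>+1) * (ln (\<nu>+1) - 1 + ln 2) \<le> \<nu> * ln \<nu> + ln \<nu> + (1 + 1/\<nu>) + 6 * (ln 2 - 1)"
    using e1 d by linarith
  have e3: "ln \<nu> + (1 + 1/\<nu>) + 6 * (ln 2 - 1) \<le> ln (\<nu> - 1)"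
  proof -
    have gen: "a + (1+d) + 6*(l-1) \<le> b" if "a \<le> b + c" "d \<le> 1/5" "c \<le> 1/4" "l \<le> 3/4" for a b c d l :: real
      using that by (simp add: field_simps)
    show ?thesis by (rule gen[OF b c1 c2 ln2_bound])
  qed
  show ?thesis using e2 e3 by linarith
qed

lemma e_bounds: "2 < exp (1::real)" "exp (1::real) < 272/100"
proof -
  have "(1 + 1/2::real) ^ 2 \<le> exp (1/2) ^ 2"
    by (intro power_mono exp_ge_add_one_self) auto
  also have "\<dots> = exp 1" by (simp add: exp_of_nat_mult[symmetric])
  finally show "2 < exp (1::real)" by (simp add: power2_eq_square)
  show "exp (1::real) < 272/100" by (rule e_less_272)
qed

lemma nu_ge_5:
  fixes \<nu> :: real
  assumes "\<nu> \<ge> exp 2 / (2 * (exp 1 - 2))"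
  shows "\<nu> \<ge> 5"
proof -
  define e :: real where "e = exp 1"
  have e1: "2 < e" "e < 272/100" using e_bounds by (auto simp: e_def)
  have "exp (2::real) = e^2" by (simp add: e_def exp_of_nat_mult[symmetric])
  have "(228/100::real)^2 \<le> (5 - e)^2" using e1 by (intro power_mono) auto
  hence "10 * (e - 2) \<le> e^2" by (simp add: power2_eq_square algebra_simps)
  hence "5 \<le> e^2 / (2 * (e - 2))" using e1 by (simp add: pos_le_divide_eq)
  thus ?thesis using assms \<open>exp 2 = e^2\<close> by (simp add: e_def)
qed

lemma bound2:
  fixes \<nu> z t :: real
  assumes "\<nu> > 0" "z > 0" "t \<ge> 0"
  shows "exp (- z * cosh t) * cosh (\<nu> * t)
     \<le> exp ((\<nu>+1) * (ln (\<nu>+1) - 1) + (\<nu>+1) * ln (2/z)) * exp (-t)"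
proof -
  define m where "m = \<nu> + 1"
  define y where "y = z * exp t / 2"
  have m: "m > 0" using assms by (simp add: m_def)
  have y: "y > 0" using assms by (simp add: y_def)
  have c1: "cosh (\<nu> * t) \<le> exp (\<nu> * t)"
  proof -
    have "exp (-(\<nu>*t)) \<le> exp (\<nu>*t)" using assms by simp
    thus ?thesis by (simp add: cosh_def)
  qed
  have c2: "exp t / 2 \<le> cosh t"
    by (simp add: cosh_def) 
  have "exp (- z * cosh t) \<le> exp (-y)"
    using c2 assms by (simp add: y_def)
  also have "\<dots> \<le> exp (m * (ln m - 1) - m * ln y)" by (rule key_exp[OF y m])
  finally have A: "exp (- z * cosh t) \<le> exp (m * (ln m - 1) - m * ln y)" .
  have ly: "ln y = ln z + t - ln 2" using assms by (simp add: y_def ln_div ln_mult)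
  have l2: "ln (2/z) = ln 2 - ln z" using assms by (simp add: ln_div)
  have "exp (- z * cosh t) * cosh (\<nu> * t) \<le> exp (m * (ln m - 1) - m * ln y) * exp (\<nu> * t)"
    using A c1 by (intro mult_mono) auto
  also have "\<dots> = exp (m * (ln m - 1) - m * ln y + \<nu> * t)" by (simp add: exp_add)
  also have "m * (ln m - 1) - m * ln y + \<nu> * t = m * (ln m - 1) + m * ln (2/z) + (- t)"
    unfolding ly l2 m_def by (simp add: algebra_simps)
  also have "exp \<dots> = exp (m * (ln m - 1) + m * ln (2/z)) * exp (-t)" by (rule exp_add)
  finally show ?thesis by (simp add: m_def)
qed

theorem mainTheorem6:
  fixes \<nu> z :: real
  assumes "\<nu> \<ge> exp 2 / (2 * (exp 1 - 2))"
    and "0 < z" and "z \<le> 1"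
  shows "besselK \<nu> z < (\<nu> / z) powr \<nu>"
proof -
  have nu5: "\<nu> \<ge> 5" by (rule nu_ge_5[OF assms(1)])
  have z: "0 < z" "z \<le> 1" using assms by auto
  define f where "f = (\<lambda>t::real. exp (- z * cosh t) * cosh (\<nu> * t))"
  define T where "T = ln (\<nu> / z)"
  define C where "C = exp ((\<nu>+1) * (ln (\<nu>+1) - 1) + (\<nu>+1) * ln (2/z))"
  have C0: "C > 0" by (simp add: C_def)
  have nz: "\<nu> / z \<ge> 1" using nu5 z by (simp add: field_simps)
  have T0: "T \<ge> 0" using nz by (simp add: T_def)
  have expT: "exp (-T) = z / \<nu>" using nu5 z by (simp add: T_def exp_minus)
  have E: "(\<nu> / z) powr \<nu> = exp (\<nu> * T)" using nu5 z by (simp add: T_def powr_def)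
  have contf: "continuous_on UNIV f" unfolding f_def by (intro continuous_intros)
  have measf: "f \<in> borel_measurable borel" by (rule borel_measurable_continuous_onI[OF contf])
  have fnn: "\<And>t. f t \<ge> 0" by (simp add: f_def)
  have b2: "\<And>t. t \<ge> 0 \<Longrightarrow> f t \<le> C * exp (-t)"
    unfolding f_def C_def using bound2 nu5 z by (metis less_le_trans zero_less_numeral)
  have b1: "\<And>t. t \<ge> 0 \<Longrightarrow> f t \<le> exp (\<nu> * t)"
  proof -
    fix t :: real assume t: "t \<ge> 0"
    have "exp (- z * cosh t) \<le> 1" using z by simp
    moreover have "cosh (\<nu> * t) \<le> exp (\<nu> * t)"
    proof -
      have "exp (-(\<nu>*t)) \<le> exp (\<nu>*t)" using t nu5 by simp
      thus ?thesis by (simp add: cosh_def)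
    qed
    ultimately have "exp (- z * cosh t) * cosh (\<nu> * t) \<le> 1 * exp (\<nu> * t)"
      by (intro mult_mono) auto
    thus "f t \<le> exp (\<nu> * t)" by (simp add: f_def)
  qed
  have i1: "set_integrable lborel {0<..T} f"
    by (rule set_integrable_subset[OF borel_integrable_atLeastAtMost'[of 0 T, OF continuous_on_subset[OF contf]]]) auto
  have ie1: "set_integrable lborel {0<..T} (\<lambda>t. exp (\<nu> * t))"
    by (rule set_integrable_subset[OF borel_integrable_atLeastAtMost'[of 0 T]]) (auto intro!: continuous_intros)
  have ie2: "set_integrable lborel {T<..} (\<lambda>t. C * exp (-t))"
    using exp_tail(1)[of T] by simp
  have i2: "set_integrable lborel {T<..} f"
  proof (rule set_integrable_bound[OF ie2])
    show "set_borel_measurable lborel {T<..} f"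
      unfolding set_borel_measurable_def using measf by measurable
    show "AE x in lborel. x \<in> {T<..} \<longrightarrow> norm (f x) \<le> norm (C * exp (- x))"
      using b2 fnn T0 C0 by (intro AE_I2) auto
  qed
  have split: "{0<..} = {0<..T} \<union> {T<..}" using T0 by auto
  have "besselK \<nu> z = (LBINT t:{0<..}. f t)" by (simp add: besselK_def f_def)
  also have "\<dots> = (LBINT t:{0<..T}. f t) + (LBINT t:{T<..}. f t)"
    unfolding split by (rule set_integral_Un[OF _ i1 i2]) auto
  also have "(LBINT t:{0<..T}. f t) \<le> (LBINT t:{0<..T}. exp (\<nu> * t))"
    by (rule set_integral_mono[OF i1 ie1]) (auto intro: b1)
  also have "(LBINT t:{T<..}. f t) \<le> (LBINT t:{T<..}. C * exp (-t))"
    using T0 by (intro set_integral_mono[OF i2 ie2]) (auto intro: b2)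
  also have "(LBINT t:{T<..}. C * exp (-t)) = C * exp (-T)"
    using exp_tail(2)[of T] by (simp add: set_integral_mult_right)
  also have "(LBINT t:{0<..T}. exp (\<nu> * t)) = (exp (\<nu> * T) - 1) / \<nu>"
  proof -
    have "(LBINT t:{0<..T}. exp (\<nu> * t)) = (LBINT t=ereal 0..ereal T. exp (\<nu> * t))"
      using T0 by (subst interval_integral_Ioc) auto
    also have "\<dots> = exp (\<nu> * T) / \<nu> - exp (\<nu> * 0) / \<nu>"
      using T0 nu5
      by (intro interval_integral_FTC_finite)
         (auto intro!: continuous_intros derivative_eq_intros simp: has_real_derivative_iff_has_vector_derivative[symmetric])
    finally show ?thesis by (simp add: diff_divide_distrib)
  qed
  finally have K: "besselK \<nu> z \<le> (exp (\<nu> * T) - 1) / \<nu> + C * exp (-T)" by simp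
  have lz: "ln (2/z) = ln 2 - ln z" using z by (simp add: ln_div)
  have lT: "T = ln \<nu> - ln z" using z nu5 by (simp add: T_def ln_div)
  have num: "(\<nu>+1) * (ln (\<nu>+1) - 1) + (\<nu>+1) * ln (2/z) + ln z \<le> \<nu> * T + ln (\<nu> - 1)"
  proof -
    have "(\<nu>+1) * (ln (\<nu>+1) - 1) + (\<nu>+1) * ln (2/z) + ln z
        = (\<nu>+1) * (ln (\<nu>+1) - 1 + ln 2) - \<nu> * ln z"
      unfolding lz by (simp add: algebra_simps)
    also have "\<dots> \<le> \<nu> * ln \<nu> + ln (\<nu> - 1) - \<nu> * ln z"
      using numeric[OF nu5] by simp
    also have "\<dots> = \<nu> * T + ln (\<nu> - 1)" unfolding lT by (simp add: algebra_simps)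
    finally show ?thesis .
  qed
  have Cz: "C * z \<le> exp (\<nu> * T) * (\<nu> - 1)"
  proof -
    have "C * z = exp ((\<nu>+1) * (ln (\<nu>+1) - 1) + (\<nu>+1) * ln (2/z) + ln z)"
      using z by (simp add: C_def exp_add)
    also have "\<dots> \<le> exp (\<nu> * T + ln (\<nu> - 1))" using num by simp
    also have "\<dots> = exp (\<nu> * T) * (\<nu> - 1)" using nu5 by (simp add: exp_add)
    finally show ?thesis .
  qed
  have "(exp (\<nu> * T) - 1) / \<nu> + C * exp (-T) = (exp (\<nu> * T) - 1 + C * z) / \<nu>"
    using nu5 by (simp add: expT field_simps)
  also have "\<dots> \<le> (exp (\<nu> * T) - 1 + exp (\<nu> * T) * (\<nu> - 1)) / \<nu>"
    using Cz nu5 by (intro divide_right_mono) auto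
  also have "\<dots> < exp (\<nu> * T)"
    using nu5 by (simp add: field_simps)
  finally show ?thesis using K E by simp
qed

end
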